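(* For every $n\ge1$, $$\sum_{\sigma\in\mathfrak S_n}(xy)^{{\rm L}(\sigma)}\Bigl(\frac{x+y}{2}\Bigr)^{n-2{\rm L}(\sigma)}\beta^{{\rm RLmin}(\sigma)}=\sum_{k=1}^n\binom nk\frac{(\beta(y-x))^{n-k}}{2^{n-k}}\Bigl(\sum_{\sigma\in\mathfrak S_k}x^{{\rm des}(\sigma)+1}y^{{\rm asc}(\sigma)}\beta^{{\rm LRmin}(\sigma)}\Bigr)+\Bigl(\frac{\beta(y-x)}{2}\Bigr)^n.$$
   Context: For $\sigma=\sigma_1\cdots\sigma_m\in\mathfrak S_m$: ${\rm asc}(\sigma)$, ${\rm des}(\sigma)$ are the numbers of $i\in[m-1]$ with $\sigma_i<\sigma_{i+1}$, resp. $\sigma_i>\sigma_{i+1}$; ${\rm L}(\sigma)$ is the number of $i$ with $1\le i<m$ and $\sigma_{i-1}<\sigma_i>\sigma_{i+1}$ (convention $\sigma_0=0$); ${\rm LRmin}(\sigma)$ is the number of $i$ with $\sigma_j>\sigma_i$ for all $j<i$; ${\rm RLmin}(\sigma)$ is the number of $i$ with $\sigma_j>\sigma_i$ for all $j>i$. *)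

theory Defs
  imports Complex_Main "HOL-Combinatorics.Multiset_Permutations"
begin

text \<open>A permutation of [m] is represented as a list sigma_1 ... sigma_m
  (an element of permutations_of_set {1..m}). Entry i (1-indexed) is
  perm_at xs i; the convention sigma_0 = 0 is built in.\<close>

definition perm_at :: "nat list \<Rightarrow> nat \<Rightarrow> nat" where
  "perm_at xs i = (if i = 0 then 0 else xs ! (i - 1))"

definition asc :: "nat list \<Rightarrow> nat" where
  "asc xs = card {i \<in> {1..<length xs}. perm_at xs i < perm_at xs (i + 1)}"

definition des :: "nat list \<Rightarrow> nat" where
  "des xs = card {i \<in> {1..<length xs}. perm_at xs i > perm_at xs (i + 1)}"

definition lpk :: "nat list \<Rightarrow> nat" where
  "lpk xs = card {i \<in> {1..<length xs}.
      perm_at xs (i - 1) < perm_at xs i \<and> perm_at xs i > perm_at xs (i + 1)}"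

definition LRmin :: "nat list \<Rightarrow> nat" where
  "LRmin xs = card {i \<in> {1..length xs}. \<forall>j \<in> {1..<i}. perm_at xs j > perm_at xs i}"

definition RLmin :: "nat list \<Rightarrow> nat" where
  "RLmin xs = card {i \<in> {1..length xs}. \<forall>j \<in> {i<..length xs}. perm_at xs j > perm_at xs i}"

end

theory Submission
  imports Defs
begin

definition ins :: "nat list \<Rightarrow> nat \<Rightarrow> nat \<Rightarrow> nat list" where
  "ins xs i a = take i xs @ a # drop i xs"

lemma length_ins[simp]: "i \<le> length xs \<Longrightarrow> length (ins xs i a) = Suc (length xs)"
  by (simp add: ins_def)

lemma perm_at_ins:
  assumes "i \<le> length xs" "j \<le> Suc (length xs)"
  shows "perm_at (ins xs i a) j =
    (if j \<le> i then perm_at xs j else if j = Suc i then a else perm_at xs (j - 1))"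
proof (cases "j = 0")
  case True then show ?thesis by (simp add: perm_at_def)
next
  case False
  consider "j \<le> i" | "j = Suc i" | "j > Suc i" by linarith
  then show ?thesis
  proof cases
    case 1
    then have "j - 1 < i" using False by linarith
    then show ?thesis using 1 False assms by (simp add: perm_at_def ins_def nth_append)
  next
    case 2
    then show ?thesis using False assms by (simp add: perm_at_def ins_def nth_append)
  next
    case 3
    define k where "k = j - Suc (Suc i)"
    have k: "j = Suc (Suc (i + k))" using 3 by (simp add: k_def)
    have "perm_at (ins xs i a) j = drop i xs ! k"
      using assms k by (simp add: perm_at_def ins_def nth_append)
    also have "\<dots> = xs ! (i + k)" using assms k by simp
    finally show ?thesis using k by (simp add: perm_at_def)
  qed
qed

lemma pfacts:
  assumes "\<sigma> \<in> permutations_of_set {1..n}"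
  shows "length \<sigma> = n"
    and "\<And>j. 1 \<le> j \<Longrightarrow> j \<le> n \<Longrightarrow> 1 \<le> perm_at \<sigma> j \<and> perm_at \<sigma> j \<le> n"
    and "\<And>j j'. 1 \<le> j \<Longrightarrow> j \<le> n \<Longrightarrow> 1 \<le> j' \<Longrightarrow> j' \<le> n \<Longrightarrow>
           perm_at \<sigma> j = perm_at \<sigma> j' \<Longrightarrow> j = j'"
    and "perm_at \<sigma> 0 = 0"
proof -
  have s: "set \<sigma> = {1..n}" and d: "distinct \<sigma>" using permutations_of_setD[OF assms] by auto
  show len: "length \<sigma> = n" using distinct_card[OF d] s by simp
  show "1 \<le> perm_at \<sigma> j \<and> perm_at \<sigma> j \<le> n" if "1 \<le> j" "j \<le> n" for j
  proof -
    have "\<sigma> ! (j - 1) \<in> set \<sigma>" using that len by simp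
    then show ?thesis using that s by (simp add: perm_at_def)
  qed
  show "j = j'" if "1 \<le> j" "j \<le> n" "1 \<le> j'" "j' \<le> n" "perm_at \<sigma> j = perm_at \<sigma> j'" for j j'
  proof -
    have "\<sigma> ! (j - 1) = \<sigma> ! (j' - 1)" using that by (simp add: perm_at_def)
    then have "j - 1 = j' - 1" using nth_eq_iff_index_eq[OF d] that len by simp
    then show ?thesis using that by simp
  qed
  show "perm_at \<sigma> 0 = 0" by (simp add: perm_at_def)
qed

lemma card_split:
  assumes "finite S" "finite M" "M \<subseteq> {a..Suc b}" "a \<le> Suc b"
    and T: "T = {j\<in>S. j < a} \<union> M \<union> Suc ` {j\<in>S. b < j}"
  shows "card T + card {j\<in>S. a \<le> j \<and> j \<le> b} = card S + card M"
proof -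
  have c1: "card T = card {j\<in>S. j < a} + card M + card (Suc ` {j\<in>S. b < j})"
  proof -
    have d1: "({j\<in>S. j < a} \<union> M) \<inter> Suc ` {j\<in>S. b < j} = {}" using assms(3,4) by auto
    have d2: "{j\<in>S. j < a} \<inter> M = {}" using assms(3) by auto
    have "card T = card ({j\<in>S. j < a} \<union> M) + card (Suc ` {j\<in>S. b < j})"
      unfolding T by (rule card_Un_disjoint) (use assms(1,2) d1 in auto)
    also have "card ({j\<in>S. j < a} \<union> M) = card {j\<in>S. j < a} + card M"
      by (rule card_Un_disjoint) (use assms(1,2) d2 in auto)
    finally show ?thesis .
  qed
  have c2: "card (Suc ` {j\<in>S. b < j}) = card {j\<in>S. b < j}"
    by (simp add: card_image)
  have e: "S = {j\<in>S. j < a} \<union> {j\<in>S. a \<le> j \<and> j \<le> b} \<union> {j\<in>S. b < j \<and> a \<le> j}"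
    by auto
  have c3: "card S = card {j\<in>S. j < a} + card {j\<in>S. a \<le> j \<and> j \<le> b} + card {j\<in>S. b < j \<and> a \<le> j}"
  proof -
    have "card S = card ({j\<in>S. j < a} \<union> {j\<in>S. a \<le> j \<and> j \<le> b}) + card {j\<in>S. b < j \<and> a \<le> j}"
      by (subst e, rule card_Un_disjoint) (use assms(1) in auto)
    also have "card ({j\<in>S. j < a} \<union> {j\<in>S. a \<le> j \<and> j \<le> b}) = card {j\<in>S. j < a} + card {j\<in>S. a \<le> j \<and> j \<le> b}"
      by (rule card_Un_disjoint) (use assms(1) in auto)
    finally show ?thesis .
  qed
  have "{j\<in>S. b < j \<and> a \<le> j} = {j\<in>S. b < j}" using assms(4) by auto
  then show ?thesis using c1 c2 c3 by simp
qed

lemma ins_nth_eq: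
  assumes "i \<le> length xs" "a \<notin> set xs" "j \<le> length xs"
  shows "(ins xs i a ! j = a) = (j = i)"
proof (cases "j < i")
  case True
  then have "ins xs i a ! j = xs ! j" using assms by (simp add: ins_def nth_append)
  moreover have "xs ! j \<in> set xs" using True assms by simp
  ultimately show ?thesis using assms True by auto
next
  case False
  show ?thesis
  proof (cases "j = i")
    case True then show ?thesis using assms by (simp add: ins_def nth_append)
  next
    case F2: False
    define k where "k = j - Suc i"
    have k: "j = Suc (i + k)" using False F2 by (simp add: k_def)
    then have "ins xs i a ! j = xs ! (i + k)" using assms by (simp add: ins_def nth_append)
    moreover have "xs ! (i + k) \<in> set xs" using k assms by simp
    ultimately show ?thesis using assms F2 by auto
  qed
qed

lemma ins_perm:
  assumes "\<sigma> \<in> permutations_of_set {1..n}" "i \<le> n"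
  shows "ins \<sigma> i (Suc n) \<in> permutations_of_set {1..Suc n}"
proof -
  have s: "set \<sigma> = {1..n}" and d: "distinct \<sigma>" using permutations_of_setD[OF assms(1)] by auto
  have st: "set (take i \<sigma>) \<union> set (drop i \<sigma>) = set \<sigma>"
    using set_append[of "take i \<sigma>" "drop i \<sigma>"] by simp
  have "set (ins \<sigma> i (Suc n)) = insert (Suc n) (set \<sigma>)"
    unfolding ins_def using st by auto
  then have 1: "set (ins \<sigma> i (Suc n)) = {1..Suc n}" using s by auto
  have nm: "Suc n \<notin> set \<sigma>" using s by auto
  have dt: "distinct (take i \<sigma>)" "distinct (drop i \<sigma>)" "set (take i \<sigma>) \<inter> set (drop i \<sigma>) = {}"
    using d by (simp_all add: set_take_disj_set_drop_if_distinct)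
  have nt: "Suc n \<notin> set (take i \<sigma>)" "Suc n \<notin> set (drop i \<sigma>)"
    using nm in_set_takeD in_set_dropD by fast+
  have 2: "distinct (ins \<sigma> i (Suc n))" unfolding ins_def
    using dt nt by simp
  show ?thesis using 1 2 by blast
qed

lemma sum_ins:
  fixes f :: "nat list \<Rightarrow> 'b::comm_monoid_add"
  shows "(\<Sum>\<tau>\<in>permutations_of_set {1..Suc n}. f \<tau>) =
         (\<Sum>\<sigma>\<in>permutations_of_set {1..n}. \<Sum>i\<in>{0..n}. f (ins \<sigma> i (Suc n)))"
proof -
  define g where "g = (\<lambda>(\<sigma>, i). ins \<sigma> i (Suc n))"
  have inj: "inj_on g (permutations_of_set {1..n} \<times> {0..n})"
  proof -
    have key: "\<sigma> = \<sigma>' \<and> i = i'" if a: "\<sigma> \<in> permutations_of_set {1..n}" "i \<le> n" "\<sigma>' \<in> permutations_of_set {1..n}" "i' \<le> n"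
      and e: "ins \<sigma> i (Suc n) = ins \<sigma>' i' (Suc n)" for \<sigma> i \<sigma>' i'
    proof -
    have l: "length \<sigma> = n" "length \<sigma>' = n" using pfacts(1) a by auto
    have nm: "Suc n \<notin> set \<sigma>" "Suc n \<notin> set \<sigma>'" using permutations_of_setD(1)[OF a(1)] permutations_of_setD(1)[OF a(3)] by auto
    have "ins \<sigma> i (Suc n) ! i = Suc n" using ins_nth_eq[of i \<sigma> "Suc n" i] l a nm by simp
    then have "ins \<sigma>' i' (Suc n) ! i = Suc n" using e by simp
    then have ii: "i = i'" using ins_nth_eq[of i' \<sigma>' "Suc n" i] l a nm by simp
    have "take i \<sigma> = take i \<sigma>' \<and> Suc n # drop i \<sigma> = Suc n # drop i \<sigma>'"
      using e ii l a by (intro append_eq_append_conv[THEN iffD1]) (auto simp: ins_def)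
    then have tk: "take i \<sigma> = take i \<sigma>'" and dr: "drop i \<sigma> = drop i \<sigma>'" by auto
    have "\<sigma> = take i \<sigma> @ drop i \<sigma>" by simp
    also have "\<dots> = take i \<sigma>' @ drop i \<sigma>'" by (simp only: tk dr)
    also have "\<dots> = \<sigma>'" by simp
    finally have "\<sigma> = \<sigma>'" .
    then show "\<sigma> = \<sigma>' \<and> i = i'" using ii by simp
    qed
    show ?thesis
    proof (rule inj_onI)
      fix p q assume "p \<in> permutations_of_set {1..n} \<times> {0..n}" "q \<in> permutations_of_set {1..n} \<times> {0..n}" "g p = g q"
      then show "p = q" using key[of "fst p" "snd p" "fst q" "snd q"]
        by (cases p, cases q) (simp add: g_def mem_Times_iff)
    qed
  qed
  have img: "g ` (permutations_of_set {1..n} \<times> {0..n}) = permutations_of_set {1..Suc n}"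
  proof
    show "g ` (permutations_of_set {1..n} \<times> {0..n}) \<subseteq> permutations_of_set {1..Suc n}"
    proof (rule image_subsetI)
      fix p assume "p \<in> permutations_of_set {1..n} \<times> {0..n}"
      then show "g p \<in> permutations_of_set {1..Suc n}" using ins_perm[of "fst p" n "snd p"]
        by (cases p) (simp add: g_def mem_Times_iff)
    qed
  next
    show "permutations_of_set {1..Suc n} \<subseteq> g ` (permutations_of_set {1..n} \<times> {0..n})"
    proof
      fix \<tau> assume t: "\<tau> \<in> permutations_of_set {1..Suc n}"
      have s: "set \<tau> = {1..Suc n}" and d: "distinct \<tau>" using permutations_of_setD[OF t] by auto
      then have "Suc n \<in> set \<tau>" by simp
      then obtain as bs where ab: "\<tau> = as @ Suc n # bs" by (meson split_list)
      have d2: "distinct (as @ bs)" and nab: "Suc n \<notin> set as" "Suc n \<notin> set bs" using d ab by auto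
      have "set (as @ bs) = set \<tau> - {Suc n}" using ab nab by auto
      also have "\<dots> = {1..n}" using s by (simp add: atLeastAtMostSuc_conv)
      finally have "set (as @ bs) = {1..n}" .
      then have p: "as @ bs \<in> permutations_of_set {1..n}" using d2 by blast
      have "length (as @ bs) = n" using pfacts(1)[OF p] .
      then have "length as \<le> n" by simp
      moreover have "g (as @ bs, length as) = \<tau>" using ab by (simp add: g_def ins_def)
      ultimately show "\<tau> \<in> g ` (permutations_of_set {1..n} \<times> {0..n})" using p
        by (intro rev_image_eqI[of "(as @ bs, length as)"]) (simp_all add: mem_Times_iff)
    qed
  qed
  have "(\<Sum>\<tau>\<in>permutations_of_set {1..Suc n}. f \<tau>) = (\<Sum>p\<in>permutations_of_set {1..n} \<times> {0..n}. f (g p))"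
    using sum.reindex[OF inj, of f] unfolding img by (simp add: comp_def)
  also have "\<dots> = (\<Sum>\<sigma>\<in>permutations_of_set {1..n}. \<Sum>i\<in>{0..n}. f (g (\<sigma>, i)))"
    by (simp add: sum.cartesian_product case_prod_unfold)
  finally show ?thesis by (simp add: g_def)
qed

lemma ins_setup:
  assumes "\<sigma> \<in> permutations_of_set {1..n}" "i \<le> n"
  shows "length \<sigma> = n" "length (ins \<sigma> i (Suc n)) = Suc n"
    "\<And>j. j \<le> Suc n \<Longrightarrow> perm_at (ins \<sigma> i (Suc n)) j =
       (if j \<le> i then perm_at \<sigma> j else if j = Suc i then Suc n else perm_at \<sigma> (j - 1))"
  using pfacts(1)[OF assms(1)] assms(2) perm_at_ins[of i \<sigma>] by auto

lemma Suc_image_iff: "0 < j \<Longrightarrow> (j \<in> Suc ` X) = (j - 1 \<in> X)"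
  by (cases j) auto

locale insctx =
  fixes \<sigma> :: "nat list" and n i :: nat
  assumes A: "\<sigma> \<in> permutations_of_set {1..n}" "i \<le> n"
begin

abbreviation "q \<equiv> perm_at (ins \<sigma> i (Suc n))"
abbreviation "p \<equiv> perm_at \<sigma>"

lemma lens: "length \<sigma> = n" "length (ins \<sigma> i (Suc n)) = Suc n"
  using ins_setup[OF A] by auto

lemma q1: "j \<le> i \<Longrightarrow> q j = p j" using ins_setup(3)[OF A, of j] A(2) by simp
lemma q2: "q (Suc i) = Suc n" using ins_setup(3)[OF A, of "Suc i"] A(2) by simp
lemma q3: "Suc i < j \<Longrightarrow> j \<le> Suc n \<Longrightarrow> q j = p (j - 1)" using ins_setup(3)[OF A, of j] by simp
lemma pb: "1 \<le> j \<Longrightarrow> j \<le> n \<Longrightarrow> 1 \<le> p j \<and> p j \<le> n" using pfacts(2)[OF A(1)] by simp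
lemma p0: "p 0 = 0" by (simp add: perm_at_def)

lemma des_ins:
  "des (ins \<sigma> i (Suc n)) + card {j\<in>{j\<in>{1..<n}. p j > p (j + 1)}. i \<le> j \<and> j \<le> i}
       = des \<sigma> + card (if i < n then {Suc i} else {})"
proof -
  define S where "S = {j\<in>{1..<n}. p j > p (j + 1)}"
  define M :: "nat set" where "M = (if i < n then {Suc i} else {})"
  have T: "{j\<in>{1..<Suc n}. q j > q (j + 1)} = {j\<in>S. j < i} \<union> M \<union> Suc ` {j\<in>S. i < j}"
  proof (rule set_eqI)
    fix j
    consider "j < i" | "j = i" | "j = Suc i" | "Suc i < j" by linarith
    then show "j \<in> {j\<in>{1..<Suc n}. q j > q (j + 1)} \<longleftrightarrow> j \<in> {j\<in>S. j < i} \<union> M \<union> Suc ` {j\<in>S. i < j}"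
    proof cases
      case 1 then show ?thesis using A(2) by (auto simp: q1 S_def M_def Suc_image_iff)
    next
      case 2 then show ?thesis using A(2) q1[of i] q2 pb[of i] by (auto simp: S_def M_def Suc_image_iff)
    next
      case 3 then show ?thesis using A(2) q2 q3[of "Suc (Suc i)"] pb[of "Suc i"] by (auto simp: S_def M_def Suc_image_iff)
    next
      case 4 then show ?thesis using A(2) q3[of j] q3[of "Suc j"] by (auto simp: S_def M_def Suc_image_iff)
    qed
  qed
  have "card {j\<in>{1..<Suc n}. q j > q (j + 1)} + card {j\<in>S. i \<le> j \<and> j \<le> i} = card S + card M"
    by (rule card_split[OF _ _ _ _ T]) (auto simp: S_def M_def)
  then show ?thesis using lens by (simp add: des_def S_def M_def)
qed

lemma asc_ins:
  "asc (ins \<sigma> i (Suc n)) + card {j\<in>{j\<in>{1..<n}. p j < p (j + 1)}. i \<le> j \<and> j \<le> i}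
       = asc \<sigma> + card (if 1 \<le> i then {i} else {})"
proof -
  define S where "S = {j\<in>{1..<n}. p j < p (j + 1)}"
  define M :: "nat set" where "M = (if 1 \<le> i then {i} else {})"
  have T: "{j\<in>{1..<Suc n}. q j < q (j + 1)} = {j\<in>S. j < i} \<union> M \<union> Suc ` {j\<in>S. i < j}"
  proof (rule set_eqI)
    fix j
    consider "j < i" | "j = i" | "j = Suc i" | "Suc i < j" by linarith
    then show "j \<in> {j\<in>{1..<Suc n}. q j < q (j + 1)} \<longleftrightarrow> j \<in> {j\<in>S. j < i} \<union> M \<union> Suc ` {j\<in>S. i < j}"
    proof cases
      case 1 then show ?thesis using A(2) by (auto simp: q1 S_def M_def Suc_image_iff)
    next
      case 2 then show ?thesis using A(2) q1[of i] q2 pb[of i] by (auto simp: S_def M_def Suc_image_iff)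
    next
      case 3 then show ?thesis using A(2) q2 q3[of "Suc (Suc i)"] pb[of "Suc i"] by (auto simp: S_def M_def Suc_image_iff)
    next
      case 4 then show ?thesis using A(2) q3[of j] q3[of "Suc j"] by (auto simp: S_def M_def Suc_image_iff)
    qed
  qed
  have "card {j\<in>{1..<Suc n}. q j < q (j + 1)} + card {j\<in>S. i \<le> j \<and> j \<le> i} = card S + card M"
    by (rule card_split[OF _ _ _ _ T]) (auto simp: S_def M_def)
  then show ?thesis using lens by (simp add: asc_def S_def M_def)
qed

lemma lpk_ins_lt:
  assumes "i < n"
  shows "lpk (ins \<sigma> i (Suc n)) + card {j\<in>{j\<in>{1..<n}. p (j - 1) < p j \<and> p j > p (j + 1)}. i \<le> j \<and> j \<le> Suc i}
       = lpk \<sigma> + 1"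
proof -
  define S where "S = {j\<in>{1..<n}. p (j - 1) < p j \<and> p j > p (j + 1)}"
  define M :: "nat set" where "M = {Suc i}"
  have T: "{j\<in>{1..<Suc n}. q (j - 1) < q j \<and> q j > q (j + 1)} = {j\<in>S. j < i} \<union> M \<union> Suc ` {j\<in>S. Suc i < j}"
  proof (rule set_eqI)
    fix j
    consider "j < i" | "j = i" | "j = Suc i" | "j = Suc (Suc i)" | "Suc (Suc i) < j" by linarith
    then show "j \<in> {j\<in>{1..<Suc n}. q (j - 1) < q j \<and> q j > q (j + 1)} \<longleftrightarrow> j \<in> {j\<in>S. j < i} \<union> M \<union> Suc ` {j\<in>S. Suc i < j}"
    proof cases
      case 1 then show ?thesis using A(2) q1[of j] q1[of "j - 1"] q1[of "Suc j"] by (auto simp: S_def M_def Suc_image_iff)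
    next
      case 2 then show ?thesis using A(2) q1[of i] q2 pb[of i] by (auto simp: S_def M_def Suc_image_iff)
    next
      case 3 then show ?thesis using assms q1[of i] q2 q3[of "Suc (Suc i)"] pb[of "Suc i"] pb[of i] p0
        by (cases "i = 0") (auto simp: S_def M_def Suc_image_iff)
    next
      case 4 then show ?thesis using assms q2 q3[of "Suc (Suc i)"] pb[of "Suc i"] by (auto simp: S_def M_def Suc_image_iff)
    next
      case 5 then show ?thesis using A(2) q3[of j] q3[of "Suc j"] q3[of "j - 1"] by (auto simp: S_def M_def Suc_image_iff)
    qed
  qed
  have "card {j\<in>{1..<Suc n}. q (j - 1) < q j \<and> q j > q (j + 1)} + card {j\<in>S. i \<le> j \<and> j \<le> Suc i} = card S + card M"
    by (rule card_split[OF _ _ _ _ T]) (auto simp: S_def M_def)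
  then show ?thesis using lens by (simp add: lpk_def S_def M_def)
qed

lemma lpk_ins_eq:
  assumes "i = n"
  shows "lpk (ins \<sigma> i (Suc n)) = lpk \<sigma>"
proof -
  define S where "S = {j\<in>{1..<n}. p (j - 1) < p j \<and> p j > p (j + 1)}"
  have T: "{j\<in>{1..<Suc n}. q (j - 1) < q j \<and> q j > q (j + 1)} = S"
  proof (rule set_eqI)
    fix j
    consider "j < i" | "j = i" | "i < j" by linarith
    then show "j \<in> {j\<in>{1..<Suc n}. q (j - 1) < q j \<and> q j > q (j + 1)} \<longleftrightarrow> j \<in> S"
    proof cases
      case 1 then show ?thesis using assms q1[of j] q1[of "j - 1"] q1[of "Suc j"] by (auto simp: S_def)
    next
      case 2 then show ?thesis using assms q1[of i] q2 pb[of i] by (auto simp: S_def)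
    next
      case 3 then show ?thesis using assms by (auto simp: S_def)
    qed
  qed
  then show ?thesis using lens by (simp add: lpk_def S_def)
qed

end


context insctx begin

lemma lr_low: "j \<le> i \<Longrightarrow> (\<forall>j'\<in>{1..<j}. q j' > q j) \<longleftrightarrow> (\<forall>j'\<in>{1..<j}. p j' > p j)"
  using q1 by auto

lemma lr_high:
  assumes "Suc i < j" "j \<le> Suc n"
  shows "(\<forall>j'\<in>{1..<j}. q j' > q j) \<longleftrightarrow> (\<forall>j'\<in>{1..<j-1}. p j' > p (j-1))"
proof
  assume H: "\<forall>j'\<in>{1..<j}. q j' > q j"
  show "\<forall>j'\<in>{1..<j-1}. p j' > p (j-1)"
  proof
    fix k assume k: "k \<in> {1..<j-1}"
    show "p k > p (j - 1)"
    proof (cases "k \<le> i")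
      case True then show ?thesis using H[rule_format, of k] k q1[of k] q3[OF assms] by auto
    next
      case False then show ?thesis using H[rule_format, of "Suc k"] k q3[of "Suc k"] q3[OF assms] assms by auto
    qed
  qed
next
  assume H: "\<forall>j'\<in>{1..<j-1}. p j' > p (j-1)"
  show "\<forall>j'\<in>{1..<j}. q j' > q j"
  proof
    fix k assume k: "k \<in> {1..<j}"
    consider "k \<le> i" | "k = Suc i" | "Suc i < k" by linarith
    then show "q k > q j"
    proof cases
      case 1 then show ?thesis using H[rule_format, of k] k q1[of k] q3[OF assms] assms by auto
    next
      case 2
      have "1 \<le> j - 1" "j - 1 \<le> n" using assms by auto
      then show ?thesis using 2 q2 q3[OF assms] pb[of "j - 1"] assms by auto
    next
      case 3
      have "k - 1 \<in> {1..<j-1}" using 3 k assms by auto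
      then show ?thesis using H[rule_format, of "k - 1"] k 3 q3[of k] q3[OF assms] assms by auto
    qed
  qed
qed

lemma LRmin_ins0:
  assumes "i = 0"
  shows "LRmin (ins \<sigma> i (Suc n)) = LRmin \<sigma> + 1"
proof -
  define S where "S = {j\<in>{1..n}. \<forall>j'\<in>{1..<j}. p j' > p j}"
  define M :: "nat set" where "M = {1}"
  have T: "{j\<in>{1..Suc n}. \<forall>j'\<in>{1..<j}. q j' > q j} = {j\<in>S. j < 0} \<union> M \<union> Suc ` {j\<in>S. 0 < j}"
  proof (rule set_eqI)
    fix j :: nat
    consider "j = 0" | "j = 1" | "1 < j" by linarith
    then show "j \<in> {j\<in>{1..Suc n}. \<forall>j'\<in>{1..<j}. q j' > q j} \<longleftrightarrow> j \<in> {j\<in>S. j < 0} \<union> M \<union> Suc ` {j\<in>S. 0 < j}"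
    proof cases
      case 1 then show ?thesis by (auto simp: S_def M_def)
    next
      case 2 then show ?thesis by (auto simp: S_def M_def)
    next
      case 3
      then have "j \<le> Suc n \<Longrightarrow> (\<forall>j'\<in>{1..<j}. q j' > q j) \<longleftrightarrow> (\<forall>j'\<in>{1..<j-1}. p j' > p (j-1))"
        using lr_high[of j] assms by simp
      then show ?thesis using 3 by (auto simp: S_def M_def Suc_image_iff)
    qed
  qed
  have C: "card {j\<in>{1..Suc n}. \<forall>j'\<in>{1..<j}. q j' > q j} + card {j\<in>S. 0 \<le> j \<and> j \<le> 0} = card S + card M"
    by (rule card_split[OF _ _ _ _ T]) (auto simp: S_def M_def)
  have e0: "{j\<in>S. 0 \<le> j \<and> j \<le> 0} = {}" by (auto simp: S_def)
  have "card {j\<in>{1..Suc n}. \<forall>j'\<in>{1..<j}. q j' > q j} = card S + card M" using C unfolding e0 by simp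
  then show ?thesis using lens by (simp add: LRmin_def S_def M_def)
qed

lemma LRmin_ins:
  assumes "1 \<le> i"
  shows "LRmin (ins \<sigma> i (Suc n)) = LRmin \<sigma>"
proof -
  define S where "S = {j\<in>{1..n}. \<forall>j'\<in>{1..<j}. p j' > p j}"
  define M :: "nat set" where "M = {}"
  have T: "{j\<in>{1..Suc n}. \<forall>j'\<in>{1..<j}. q j' > q j} = {j\<in>S. j < Suc i} \<union> M \<union> Suc ` {j\<in>S. i < j}"
  proof (rule set_eqI)
    fix j :: nat
    consider "j \<le> i" | "j = Suc i" | "Suc i < j" by linarith
    then show "j \<in> {j\<in>{1..Suc n}. \<forall>j'\<in>{1..<j}. q j' > q j} \<longleftrightarrow> j \<in> {j\<in>S. j < Suc i} \<union> M \<union> Suc ` {j\<in>S. i < j}"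
    proof cases
      case 1 then show ?thesis using lr_low[OF 1] A(2) by (auto simp: S_def M_def Suc_image_iff)
    next
      case 2
      have w: "1 \<in> {1..<j}" using 2 assms by auto
      have "\<not> q 1 > q j" using 2 assms q1[of 1] q2 pb[of 1] A(2) by auto
      then have "\<not> (\<forall>j'\<in>{1..<j}. q j' > q j)" using w by blast
      then show ?thesis using 2 by (auto simp: S_def M_def Suc_image_iff)
    next
      case 3
      then have "j \<le> Suc n \<Longrightarrow> (\<forall>j'\<in>{1..<j}. q j' > q j) \<longleftrightarrow> (\<forall>j'\<in>{1..<j-1}. p j' > p (j-1))"
        using lr_high[of j] by simp
      then show ?thesis using 3 by (auto simp: S_def M_def Suc_image_iff)
    qed
  qed
  have C: "card {j\<in>{1..Suc n}. \<forall>j'\<in>{1..<j}. q j' > q j} + card {j\<in>S. Suc i \<le> j \<and> j \<le> i} = card S + card M"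
    by (rule card_split[OF _ _ _ _ T]) (auto simp: S_def M_def)
  have e0: "{j\<in>S. Suc i \<le> j \<and> j \<le> i} = {}" by auto
  have "card {j\<in>{1..Suc n}. \<forall>j'\<in>{1..<j}. q j' > q j} = card S + card M" using C unfolding e0 by simp
  then show ?thesis using lens by (simp add: LRmin_def S_def M_def)
qed

lemma rl_low:
  assumes "1 \<le> j" "j \<le> i"
  shows "(\<forall>j'\<in>{j<..Suc n}. q j' > q j) \<longleftrightarrow> (\<forall>j'\<in>{j<..n}. p j' > p j)"
proof
  assume H: "\<forall>j'\<in>{j<..Suc n}. q j' > q j"
  show "\<forall>j'\<in>{j<..n}. p j' > p j"
  proof
    fix k assume k: "k \<in> {j<..n}"
    show "p k > p j"
    proof (cases "k \<le> i")
      case True then show ?thesis using H[rule_format, of k] k q1[of k] q1[of j] assms by auto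
    next
      case False then show ?thesis using H[rule_format, of "Suc k"] k q3[of "Suc k"] q1[of j] assms by auto
    qed
  qed
next
  assume H: "\<forall>j'\<in>{j<..n}. p j' > p j"
  show "\<forall>j'\<in>{j<..Suc n}. q j' > q j"
  proof
    fix k assume k: "k \<in> {j<..Suc n}"
    consider "k \<le> i" | "k = Suc i" | "Suc i < k" by linarith
    then show "q k > q j"
    proof cases
      case 1 then show ?thesis using H[rule_format, of k] k q1[of k] q1[of j] assms A(2) by auto
    next
      case 2 then show ?thesis using q2 q1[of j] pb[of j] assms A(2) by auto
    next
      case 3
      have "k - 1 \<in> {j<..n}" using 3 k assms by auto
      then show ?thesis using H[rule_format, of "k - 1"] k 3 q3[of k] q1[of j] assms by auto
    qed
  qed
qed

lemma rl_high:
  assumes "Suc i < j" "j \<le> Suc n"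
  shows "(\<forall>j'\<in>{j<..Suc n}. q j' > q j) \<longleftrightarrow> (\<forall>j'\<in>{j-1<..n}. p j' > p (j-1))"
proof
  assume H: "\<forall>j'\<in>{j<..Suc n}. q j' > q j"
  show "\<forall>j'\<in>{j-1<..n}. p j' > p (j-1)"
  proof
    fix k assume k: "k \<in> {j-1<..n}"
    show "p k > p (j - 1)" using H[rule_format, of "Suc k"] k q3[of "Suc k"] q3[OF assms] assms by auto
  qed
next
  assume H: "\<forall>j'\<in>{j-1<..n}. p j' > p (j-1)"
  show "\<forall>j'\<in>{j<..Suc n}. q j' > q j"
  proof
    fix k assume k: "k \<in> {j<..Suc n}"
    have "k - 1 \<in> {j-1<..n}" using k assms by auto
    then show "q k > q j" using H[rule_format, of "k - 1"] k q3[of k] q3[OF assms] assms by auto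
  qed
qed

lemma RLmin_lt:
  assumes "i < n"
  shows "RLmin (ins \<sigma> i (Suc n)) = RLmin \<sigma>"
proof -
  define S where "S = {j\<in>{1..n}. \<forall>j'\<in>{j<..n}. p j' > p j}"
  define M :: "nat set" where "M = {}"
  have T: "{j\<in>{1..Suc n}. \<forall>j'\<in>{j<..Suc n}. q j' > q j} = {j\<in>S. j < Suc i} \<union> M \<union> Suc ` {j\<in>S. i < j}"
  proof (rule set_eqI)
    fix j :: nat
    consider "j = 0" | "1 \<le> j" "j \<le> i" | "j = Suc i" | "Suc i < j" by linarith
    then show "j \<in> {j\<in>{1..Suc n}. \<forall>j'\<in>{j<..Suc n}. q j' > q j} \<longleftrightarrow> j \<in> {j\<in>S. j < Suc i} \<union> M \<union> Suc ` {j\<in>S. i < j}"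
    proof cases
      case 1 then show ?thesis by (auto simp: S_def M_def)
    next
      case 2 then show ?thesis using rl_low[OF 2] A(2) by (auto simp: S_def M_def Suc_image_iff)
    next
      case 3
      have w: "Suc (Suc i) \<in> {j<..Suc n}" using 3 assms by auto
      have "\<not> q (Suc (Suc i)) > q j" using 3 assms q3[of "Suc (Suc i)"] q2 pb[of "Suc i"] by auto
      then have "\<not> (\<forall>j'\<in>{j<..Suc n}. q j' > q j)" using w by blast
      then show ?thesis using 3 by (auto simp: S_def M_def Suc_image_iff)
    next
      case 4
      then have "j \<le> Suc n \<Longrightarrow> (\<forall>j'\<in>{j<..Suc n}. q j' > q j) \<longleftrightarrow> (\<forall>j'\<in>{j-1<..n}. p j' > p (j-1))"
        using rl_high[of j] by simp
      then show ?thesis using 4 by (auto simp: S_def M_def Suc_image_iff)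
    qed
  qed
  have C: "card {j\<in>{1..Suc n}. \<forall>j'\<in>{j<..Suc n}. q j' > q j} + card {j\<in>S. Suc i \<le> j \<and> j \<le> i} = card S + card M"
    by (rule card_split[OF _ _ _ _ T]) (auto simp: S_def M_def)
  have e0: "{j\<in>S. Suc i \<le> j \<and> j \<le> i} = {}" by auto
  have "card {j\<in>{1..Suc n}. \<forall>j'\<in>{j<..Suc n}. q j' > q j} = card S + card M" using C unfolding e0 by simp
  then show ?thesis using lens by (simp add: RLmin_def S_def M_def)
qed

lemma RLmin_eq:
  assumes "i = n"
  shows "RLmin (ins \<sigma> i (Suc n)) = RLmin \<sigma> + 1"
proof -
  define S where "S = {j\<in>{1..n}. \<forall>j'\<in>{j<..n}. p j' > p j}"
  define M :: "nat set" where "M = {Suc n}"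
  have T: "{j\<in>{1..Suc n}. \<forall>j'\<in>{j<..Suc n}. q j' > q j} = {j\<in>S. j < Suc n} \<union> M \<union> Suc ` {j\<in>S. n < j}"
  proof (rule set_eqI)
    fix j :: nat
    consider "j = 0" | "1 \<le> j" "j \<le> n" | "j = Suc n" | "Suc n < j" by linarith
    then show "j \<in> {j\<in>{1..Suc n}. \<forall>j'\<in>{j<..Suc n}. q j' > q j} \<longleftrightarrow> j \<in> {j\<in>S. j < Suc n} \<union> M \<union> Suc ` {j\<in>S. n < j}"
    proof cases
      case 1 then show ?thesis by (auto simp: S_def M_def)
    next
      case 2 then show ?thesis using rl_low[of j] assms by (auto simp: S_def M_def Suc_image_iff)
    next
      case 3 then show ?thesis by (auto simp: S_def M_def)
    next
      case 4 then show ?thesis by (auto simp: S_def M_def Suc_image_iff)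
    qed
  qed
  have C: "card {j\<in>{1..Suc n}. \<forall>j'\<in>{j<..Suc n}. q j' > q j} + card {j\<in>S. Suc n \<le> j \<and> j \<le> n} = card S + card M"
    by (rule card_split[OF _ _ _ _ T]) (auto simp: S_def M_def)
  have e0: "{j\<in>S. Suc n \<le> j \<and> j \<le> n} = {}" by auto
  have "card {j\<in>{1..Suc n}. \<forall>j'\<in>{j<..Suc n}. q j' > q j} = card S + card M" using C unfolding e0 by simp
  then show ?thesis using lens by (simp add: RLmin_def S_def M_def)
qed

end


lemma card_single_filter: "card {j\<in>X. i \<le> j \<and> j \<le> (i::nat)} = (if i \<in> X then 1 else 0)"
proof -
  have "{j\<in>X. i \<le> j \<and> j \<le> i} = (if i \<in> X then {i} else {})" by auto
  then show ?thesis by simp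
qed

definition wA :: "real \<Rightarrow> real \<Rightarrow> real \<Rightarrow> nat list \<Rightarrow> real" where
  "wA \<beta> x y \<tau> = x ^ (des \<tau> + 1) * y ^ asc \<tau> * \<beta> ^ LRmin \<tau>"

lemma A_step:
  assumes S: "\<sigma> \<in> permutations_of_set {1..n}" and n: "1 \<le> n"
  shows "(\<Sum>i\<in>{0..n}. wA \<beta> x y (ins \<sigma> i (Suc n)))
       = wA \<beta> x y \<sigma> * (\<beta> * x + y + y * des \<sigma> + x * asc \<sigma>)"
proof -
  define D where "D = {j\<in>{1..<n}. perm_at \<sigma> j > perm_at \<sigma> (j + 1)}"
  define As where "As = {j\<in>{1..<n}. perm_at \<sigma> j < perm_at \<sigma> (j + 1)}"
  have len: "length \<sigma> = n" using pfacts(1)[OF S] .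
  have desD: "des \<sigma> = card D" and ascA: "asc \<sigma> = card As"
    by (simp_all add: des_def asc_def D_def As_def len)
  have part: "i \<in> D \<longleftrightarrow> i \<notin> As" if "1 \<le> i" "i < n" for i
  proof -
    have "perm_at \<sigma> i \<noteq> perm_at \<sigma> (i + 1)" using pfacts(3)[OF S, of i "i+1"] that by auto
    then show ?thesis using that by (auto simp: D_def As_def)
  qed
  have w0: "wA \<beta> x y (ins \<sigma> 0 (Suc n)) = wA \<beta> x y \<sigma> * (\<beta> * x)"
  proof -
    interpret insctx \<sigma> n 0 using S by unfold_locales auto
    have "des (ins \<sigma> 0 (Suc n)) = des \<sigma> + 1" using des_ins[unfolded card_single_filter] n by simp
    moreover have "asc (ins \<sigma> 0 (Suc n)) = asc \<sigma>" using asc_ins[unfolded card_single_filter] by simp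
    moreover have "LRmin (ins \<sigma> 0 (Suc n)) = LRmin \<sigma> + 1" using LRmin_ins0 by simp
    ultimately show ?thesis by (simp add: wA_def)
  qed
  have wn: "wA \<beta> x y (ins \<sigma> n (Suc n)) = wA \<beta> x y \<sigma> * y"
  proof -
    interpret insctx \<sigma> n n using S by unfold_locales auto
    have "des (ins \<sigma> n (Suc n)) = des \<sigma>" using des_ins[unfolded card_single_filter] by simp
    moreover have "asc (ins \<sigma> n (Suc n)) = asc \<sigma> + 1" using asc_ins[unfolded card_single_filter] n by simp
    moreover have "LRmin (ins \<sigma> n (Suc n)) = LRmin \<sigma>" using LRmin_ins n by simp
    ultimately show ?thesis by (simp add: wA_def)
  qed
  have wi: "wA \<beta> x y (ins \<sigma> i (Suc n)) = (if i \<in> D then wA \<beta> x y \<sigma> * y else wA \<beta> x y \<sigma> * x)"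
    if i: "1 \<le> i" "i < n" for i
  proof -
    interpret insctx \<sigma> n i using S i by unfold_locales auto
    have d: "des (ins \<sigma> i (Suc n)) + (if i \<in> D then 1 else 0) = des \<sigma> + 1"
      using des_ins[unfolded card_single_filter] i by (simp add: D_def)
    have a: "asc (ins \<sigma> i (Suc n)) + (if i \<in> As then 1 else 0) = asc \<sigma> + 1"
      using asc_ins[unfolded card_single_filter] i by (simp add: As_def)
    have l: "LRmin (ins \<sigma> i (Suc n)) = LRmin \<sigma>" using LRmin_ins i by simp
    show ?thesis
    proof (cases "i \<in> D")
      case True
      then have "i \<notin> As" using part i by auto
      then show ?thesis using True d a l by (simp add: wA_def)
    next
      case False
      then have "i \<in> As" using part i by auto
      then show ?thesis using False d a l by (simp add: wA_def)
    qed
  qed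
  have split: "{0..n} = insert 0 (insert n {1..<n})" using n by auto
  have "(\<Sum>i\<in>{0..n}. wA \<beta> x y (ins \<sigma> i (Suc n)))
      = wA \<beta> x y (ins \<sigma> 0 (Suc n)) + wA \<beta> x y (ins \<sigma> n (Suc n)) + (\<Sum>i\<in>{1..<n}. wA \<beta> x y (ins \<sigma> i (Suc n)))"
    using n by (simp add: split)
  also have "(\<Sum>i\<in>{1..<n}. wA \<beta> x y (ins \<sigma> i (Suc n)))
      = (\<Sum>i\<in>{1..<n}. (if i \<in> D then wA \<beta> x y \<sigma> * y else wA \<beta> x y \<sigma> * x))"
    by (rule sum.cong) (auto simp: wi)
  also have "\<dots> = (\<Sum>i\<in>{1..<n} \<inter> {i. i \<in> D}. wA \<beta> x y \<sigma> * y) + (\<Sum>i\<in>{1..<n} \<inter> - {i. i \<in> D}. wA \<beta> x y \<sigma> * x)"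
    by (rule sum.If_cases) simp
  also have "{1..<n} \<inter> {i. i \<in> D} = D" by (auto simp: D_def)
  also have "{1..<n} \<inter> - {i. i \<in> D} = As" using part by (auto simp: As_def)
  finally show ?thesis using w0 wn desD ascA by (simp add: algebra_simps)
qed


definition wP :: "real \<Rightarrow> real \<Rightarrow> real \<Rightarrow> nat \<Rightarrow> nat list \<Rightarrow> real" where
  "wP \<beta> x y m \<tau> = (x * y) ^ lpk \<tau> * ((x + y) / 2) ^ (m - 2 * lpk \<tau>) * \<beta> ^ RLmin \<tau>"

lemma sum_bool_card: "finite A \<Longrightarrow> A \<inter> {j. j \<in> P} = P \<Longrightarrow> (\<Sum>j\<in>A. (of_bool (j \<in> P) :: nat)) = card P"
  by simp

lemma P_step:
  assumes S: "\<sigma> \<in> permutations_of_set {1..n}"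
  shows "2 * lpk \<sigma> \<le> n"
    and "(\<Sum>i\<in>{0..n}. wP \<beta> x y (Suc n) (ins \<sigma> i (Suc n)))
       = of_nat (2 * lpk \<sigma>) * (x * y) ^ lpk \<sigma> * ((x + y) / 2) ^ (Suc n - 2 * lpk \<sigma>) * \<beta> ^ RLmin \<sigma>
       + of_nat (n - 2 * lpk \<sigma>) * (x * y) ^ (lpk \<sigma> + 1) * ((x + y) / 2) ^ (Suc n - 2 * (lpk \<sigma> + 1)) * \<beta> ^ RLmin \<sigma>
       + (x * y) ^ lpk \<sigma> * ((x + y) / 2) ^ (Suc n - 2 * lpk \<sigma>) * \<beta> ^ (RLmin \<sigma> + 1)"
proof -
  define p where "p = perm_at \<sigma>"
  define Pk where "Pk = {j\<in>{1..<n}. p (j - 1) < p j \<and> p j > p (j + 1)}"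
  define c where "c i = card {j\<in>Pk. i \<le> j \<and> j \<le> Suc i}" for i
  define L where "L = lpk \<sigma>"
  define R where "R = RLmin \<sigma>"
  have len: "length \<sigma> = n" using pfacts(1)[OF S] .
  have LPk: "L = card Pk" by (simp add: L_def lpk_def Pk_def p_def len)
  have fin: "finite Pk" by (simp add: Pk_def)
  have notboth: "\<not> (i \<in> Pk \<and> Suc i \<in> Pk)" for i by (auto simp: Pk_def)
  have cval: "c i = of_bool (i \<in> Pk) + of_bool (Suc i \<in> Pk)" for i
  proof -
    have "{j\<in>Pk. i \<le> j \<and> j \<le> Suc i} = (Pk \<inter> {i}) \<union> (Pk \<inter> {Suc i})" by auto
    then show ?thesis unfolding c_def by (auto simp: card_Un_disjoint)
  qed
  have c01: "c i = 0 \<or> c i = 1" for i using cval[of i] notboth[of i] by auto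
  have s1: "(\<Sum>i\<in>{0..<n}. (of_bool (i \<in> Pk) :: nat)) = card Pk"
  proof -
    have "{0..<n} \<inter> {i. i \<in> Pk} = Pk" by (auto simp: Pk_def)
    then show ?thesis by simp
  qed
  have s2: "(\<Sum>i\<in>{0..<n}. (of_bool (Suc i \<in> Pk) :: nat)) = card Pk"
  proof -
    have "(\<Sum>i\<in>{0..<n}. (of_bool (Suc i \<in> Pk) :: nat)) = (\<Sum>j\<in>{Suc 0..<Suc n}. (of_bool (j \<in> Pk) :: nat))"
      by (rule sum.shift_bounds_Suc_ivl[symmetric])
    also have e: "{Suc 0..<Suc n} \<inter> {j. j \<in> Pk} = Pk" by (auto simp: Pk_def)
    have "(\<Sum>j\<in>{Suc 0..<Suc n}. (of_bool (j \<in> Pk) :: nat)) = card Pk"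
      by (rule sum_bool_card[OF _ e]) simp
    finally show ?thesis .
  qed
  define I1 where "I1 = {i\<in>{0..<n}. c i = 1}"
  have cardI1: "card I1 = 2 * L"
  proof -
    have "(\<Sum>i\<in>{0..<n}. c i) = 2 * L" using s1 s2 by (simp add: cval sum.distrib LPk)
    moreover have "(\<Sum>i\<in>{0..<n}. c i) = (\<Sum>i\<in>{0..<n}. (of_bool (c i = 1) :: nat))"
      by (rule sum.cong) (use c01 in auto)
    moreover have "{0..<n} \<inter> {i. c i = 1} = I1" by (auto simp: I1_def)
    ultimately show ?thesis by simp
  qed
  have I1sub: "I1 \<subseteq> {0..<n}" by (auto simp: I1_def)
  have "card I1 \<le> n" using card_mono[OF _ I1sub] by simp
  then show le: "2 * lpk \<sigma> \<le> n" using cardI1 L_def by simp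
  define X where "X = (x * y) ^ L * ((x + y) / 2) ^ (Suc n - 2 * L) * \<beta> ^ R"
  define Y where "Y = (x * y) ^ (L + 1) * ((x + y) / 2) ^ (Suc n - 2 * (L + 1)) * \<beta> ^ R"
  have wlt: "wP \<beta> x y (Suc n) (ins \<sigma> i (Suc n)) = (if i \<in> I1 then X else Y)" if i: "i < n" for i
  proof -
    interpret insctx \<sigma> n i using S i by unfold_locales auto
    have l: "lpk (ins \<sigma> i (Suc n)) + c i = L + 1" using lpk_ins_lt i
      by (simp add: c_def Pk_def p_def L_def)
    have r: "RLmin (ins \<sigma> i (Suc n)) = R" using RLmin_lt i by (simp add: R_def)
    show ?thesis using c01[of i] l r i by (auto simp: wP_def X_def Y_def I1_def)
  qed
  have wn: "wP \<beta> x y (Suc n) (ins \<sigma> n (Suc n)) = (x * y) ^ L * ((x + y) / 2) ^ (Suc n - 2 * L) * \<beta> ^ (R + 1)"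
  proof -
    interpret insctx \<sigma> n n using S by unfold_locales auto
    show ?thesis using lpk_ins_eq RLmin_eq by (simp add: wP_def L_def R_def)
  qed
  have "(\<Sum>i\<in>{0..n}. wP \<beta> x y (Suc n) (ins \<sigma> i (Suc n)))
      = (\<Sum>i\<in>{0..<n}. wP \<beta> x y (Suc n) (ins \<sigma> i (Suc n))) + wP \<beta> x y (Suc n) (ins \<sigma> n (Suc n))"
    by (simp add: atLeastLessThanSuc_atLeastAtMost[symmetric])
  also have "(\<Sum>i\<in>{0..<n}. wP \<beta> x y (Suc n) (ins \<sigma> i (Suc n))) = (\<Sum>i\<in>{0..<n}. (if i \<in> I1 then X else Y))"
    by (rule sum.cong) (auto simp: wlt)
  also have "\<dots> = (\<Sum>i\<in>{0..<n} \<inter> {i. i \<in> I1}. X) + (\<Sum>i\<in>{0..<n} \<inter> - {i. i \<in> I1}. Y)"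
    by (rule sum.If_cases) simp
  also have "{0..<n} \<inter> {i. i \<in> I1} = I1" using I1sub by auto
  also have "{0..<n} \<inter> - {i. i \<in> I1} = {0..<n} - I1" by auto
  finally have "(\<Sum>i\<in>{0..n}. wP \<beta> x y (Suc n) (ins \<sigma> i (Suc n)))
     = of_nat (card I1) * X + of_nat (card ({0..<n} - I1)) * Y + wP \<beta> x y (Suc n) (ins \<sigma> n (Suc n))"
    by simp
  moreover have "card ({0..<n} - I1) = n - 2 * L" using card_Diff_subset[OF finite_subset[OF I1sub] I1sub] cardI1 by simp
  ultimately show "(\<Sum>i\<in>{0..n}. wP \<beta> x y (Suc n) (ins \<sigma> i (Suc n)))
       = of_nat (2 * lpk \<sigma>) * (x * y) ^ lpk \<sigma> * ((x + y) / 2) ^ (Suc n - 2 * lpk \<sigma>) * \<beta> ^ RLmin \<sigma>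
       + of_nat (n - 2 * lpk \<sigma>) * (x * y) ^ (lpk \<sigma> + 1) * ((x + y) / 2) ^ (Suc n - 2 * (lpk \<sigma> + 1)) * \<beta> ^ RLmin \<sigma>
       + (x * y) ^ lpk \<sigma> * ((x + y) / 2) ^ (Suc n - 2 * lpk \<sigma>) * \<beta> ^ (RLmin \<sigma> + 1)"
    using cardI1 wn by (simp add: X_def Y_def L_def R_def mult.assoc)
qed


definition AA :: "real \<Rightarrow> real \<Rightarrow> real \<Rightarrow> nat \<Rightarrow> real" where
  "AA \<beta> x y k = (if k = 0 then 1 else (\<Sum>\<sigma>\<in>permutations_of_set {1..k}. wA \<beta> x y \<sigma>))"

definition DA :: "real \<Rightarrow> real \<Rightarrow> real \<Rightarrow> nat \<Rightarrow> real" where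
  "DA \<beta> x y k = (if k = 0 then 0 else (\<Sum>\<sigma>\<in>permutations_of_set {1..k}.
      (of_nat (des \<sigma> + 1) * x ^ des \<sigma> * y ^ asc \<sigma> + x ^ (des \<sigma> + 1) * (of_nat (asc \<sigma>) * y ^ (asc \<sigma> - 1)))
        * \<beta> ^ LRmin \<sigma>))"

definition PP :: "real \<Rightarrow> real \<Rightarrow> real \<Rightarrow> nat \<Rightarrow> real" where
  "PP \<beta> x y n = (\<Sum>\<sigma>\<in>permutations_of_set {1..n}. wP \<beta> x y n \<sigma>)"

definition DP :: "real \<Rightarrow> real \<Rightarrow> real \<Rightarrow> nat \<Rightarrow> real" where
  "DP \<beta> x y n = (\<Sum>\<sigma>\<in>permutations_of_set {1..n}.
      (of_nat (lpk \<sigma>) * (x * y) ^ (lpk \<sigma> - 1) * (x + y) * ((x + y) / 2) ^ (n - 2 * lpk \<sigma>)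
       + (x * y) ^ lpk \<sigma> * (of_nat (n - 2 * lpk \<sigma>) * ((x + y) / 2) ^ (n - 2 * lpk \<sigma> - 1))) * \<beta> ^ RLmin \<sigma>)"

lemma dA_term:
  "((\<lambda>t. (x + t) ^ (a + 1) * (y + t) ^ b * c) has_real_derivative
     ((of_nat (a + 1) * x ^ a * y ^ b + x ^ (a + 1) * (of_nat b * y ^ (b - 1))) * c)) (at 0)"
  apply (rule derivative_eq_intros refl)+
  apply simp
  done

lemma dP_term:
  "((\<lambda>t. ((x + t) * (y + t)) ^ a * (((x + t) + (y + t)) / 2) ^ b * c) has_real_derivative
     ((of_nat a * (x * y) ^ (a - 1) * (x + y) * ((x + y) / 2) ^ b
       + (x * y) ^ a * (of_nat b * ((x + y) / 2) ^ (b - 1))) * c)) (at 0)"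
proof -
  have d1: "((\<lambda>t. (x + t) * (y + t)) has_real_derivative (x + y)) (at 0)"
    by (auto intro!: derivative_eq_intros)
  have d2: "((\<lambda>t. ((x + t) + (y + t)) / 2) has_real_derivative 1) (at 0)"
    by (auto intro!: derivative_eq_intros)
  note d3 = DERIV_cmult_right[OF DERIV_mult[OF DERIV_power[OF d1, of a] DERIV_power[OF d2, of b]], of c]
  show ?thesis by (rule DERIV_cong[OF d3]) (simp add: algebra_simps)
qed

lemma AA_deriv: "((\<lambda>t. AA \<beta> (x + t) (y + t) k) has_real_derivative DA \<beta> x y k) (at 0)"
proof (cases "k = 0")
  case True then show ?thesis by (simp add: AA_def DA_def)
next
  case False
  have e1: "(\<lambda>t. AA \<beta> (x + t) (y + t) k) = (\<lambda>t. \<Sum>\<sigma>\<in>permutations_of_set {1..k}. wA \<beta> (x + t) (y + t) \<sigma>)"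
    using False by (simp add: AA_def fun_eq_iff)
  have e2: "DA \<beta> x y k = (\<Sum>\<sigma>\<in>permutations_of_set {1..k}.
      (of_nat (des \<sigma> + 1) * x ^ des \<sigma> * y ^ asc \<sigma> + x ^ (des \<sigma> + 1) * (of_nat (asc \<sigma>) * y ^ (asc \<sigma> - 1)))
        * \<beta> ^ LRmin \<sigma>)" using False by (simp add: DA_def)
  show ?thesis unfolding e1 e2 wA_def by (intro DERIV_sum dA_term)
qed

lemma PP_deriv: "((\<lambda>t. PP \<beta> (x + t) (y + t) n) has_real_derivative DP \<beta> x y n) (at 0)"
  unfolding PP_def DP_def wP_def by (intro DERIV_sum dP_term)


lemma alg_A:
  fixes x y c \<beta> :: real
  shows "x ^ (d + 1) * y ^ a * c * (\<beta> * x + y + y * of_nat d + x * of_nat a)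
   = \<beta> * x * (x ^ (d + 1) * y ^ a * c)
     + x * y * ((of_nat (d + 1) * x ^ d * y ^ a + x ^ (d + 1) * (of_nat a * y ^ (a - 1))) * c)"
  by (cases a) (simp_all add: algebra_simps)

lemma alg_P:
  fixes u v c \<beta> :: real
  shows "of_nat (2 * a) * v ^ a * u ^ Suc b * c + of_nat b * v ^ (a + 1) * u ^ (b - 1) * c
      + v ^ a * u ^ Suc b * (c * \<beta>)
    = \<beta> * u * (v ^ a * u ^ b * c)
      + v * ((of_nat a * v ^ (a - 1) * (2 * u) * u ^ b + v ^ a * (of_nat b * u ^ (b - 1))) * c)"
  by (cases a; cases b) (simp_all add: algebra_simps)

lemma perm1: "permutations_of_set {1..Suc 0} = {[Suc 0]}"
  by simp

lemma AA_rec: "AA \<beta> x y (Suc k) = \<beta> * x * AA \<beta> x y k + x * y * DA \<beta> x y k"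
proof (cases "k = 0")
  case True
  have "des [Suc 0] = 0" "asc [Suc 0] = 0" by (simp_all add: des_def asc_def)
  moreover have "LRmin [Suc 0] = 1"
  proof -
    have "{i \<in> {1..length [Suc 0]}. \<forall>j\<in>{1..<i}. perm_at [Suc 0] i < perm_at [Suc 0] j} = {1}" by auto
    then show ?thesis by (simp add: LRmin_def)
  qed
  ultimately show ?thesis using True by (simp add: AA_def DA_def wA_def perm1)
next
  case False
  then have k: "1 \<le> k" by simp
  have "AA \<beta> x y (Suc k) = (\<Sum>\<sigma>\<in>permutations_of_set {1..Suc k}. wA \<beta> x y \<sigma>)" by (simp add: AA_def)
  also have "\<dots> = (\<Sum>\<sigma>\<in>permutations_of_set {1..k}. \<Sum>i\<in>{0..k}. wA \<beta> x y (ins \<sigma> i (Suc k)))"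
    by (rule sum_ins)
  also have "\<dots> = (\<Sum>\<sigma>\<in>permutations_of_set {1..k}. wA \<beta> x y \<sigma> * (\<beta> * x + y + y * des \<sigma> + x * asc \<sigma>))"
    by (rule sum.cong[OF refl], rule A_step[OF _ k], assumption)
  also have "\<dots> = (\<Sum>\<sigma>\<in>permutations_of_set {1..k}. \<beta> * x * wA \<beta> x y \<sigma>
     + x * y * ((of_nat (des \<sigma> + 1) * x ^ des \<sigma> * y ^ asc \<sigma> + x ^ (des \<sigma> + 1) * (of_nat (asc \<sigma>) * y ^ (asc \<sigma> - 1)))
        * \<beta> ^ LRmin \<sigma>))"
    by (rule sum.cong[OF refl]) (unfold wA_def, rule alg_A)
  also have "\<dots> = \<beta> * x * AA \<beta> x y k + x * y * DA \<beta> x y k"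
    using False by (simp add: AA_def DA_def sum.distrib sum_distrib_left)
  finally show ?thesis .
qed

lemma PP_rec: "PP \<beta> x y (Suc n) = \<beta> * ((x + y) / 2) * PP \<beta> x y n + x * y * DP \<beta> x y n"
proof -
  have "PP \<beta> x y (Suc n) = (\<Sum>\<sigma>\<in>permutations_of_set {1..n}. \<Sum>i\<in>{0..n}. wP \<beta> x y (Suc n) (ins \<sigma> i (Suc n)))"
    unfolding PP_def by (rule sum_ins)
  also have "\<dots> = (\<Sum>\<sigma>\<in>permutations_of_set {1..n}. \<beta> * ((x + y) / 2) * wP \<beta> x y n \<sigma>
     + x * y * ((of_nat (lpk \<sigma>) * (x * y) ^ (lpk \<sigma> - 1) * (x + y) * ((x + y) / 2) ^ (n - 2 * lpk \<sigma>)
       + (x * y) ^ lpk \<sigma> * (of_nat (n - 2 * lpk \<sigma>) * ((x + y) / 2) ^ (n - 2 * lpk \<sigma> - 1))) * \<beta> ^ RLmin \<sigma>))"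
  proof (rule sum.cong[OF refl])
    fix \<sigma> assume S: "\<sigma> \<in> permutations_of_set {1..n}"
    note st1 = P_step(1)[OF S]
    note st2 = P_step(2)[OF S, of \<beta> x y]
    define L where "L = lpk \<sigma>"
    define b where "b = n - 2 * L"
    have le: "2 * L \<le> n" using st1 by (simp add: L_def)
    have e1: "Suc n - 2 * L = Suc b" using le by (simp add: b_def)
    have e2: "Suc n - 2 * (L + 1) = b - 1" using le by (simp add: b_def)
    define u where "u = (x + y) / 2"
    have xyu: "x + y = 2 * u" by (simp add: u_def)
    show "(\<Sum>i\<in>{0..n}. wP \<beta> x y (Suc n) (ins \<sigma> i (Suc n))) = \<beta> * ((x + y) / 2) * wP \<beta> x y n \<sigma>
     + x * y * ((of_nat (lpk \<sigma>) * (x * y) ^ (lpk \<sigma> - 1) * (x + y) * ((x + y) / 2) ^ (n - 2 * lpk \<sigma>)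
       + (x * y) ^ lpk \<sigma> * (of_nat (n - 2 * lpk \<sigma>) * ((x + y) / 2) ^ (n - 2 * lpk \<sigma> - 1))) * \<beta> ^ RLmin \<sigma>)"
      apply (subst st2)
      apply (unfold wP_def L_def[symmetric] b_def[symmetric] e1 e2)
      apply (unfold u_def[symmetric])
      apply (unfold xyu)
      using alg_P[of L "x * y" u b "\<beta> ^ RLmin \<sigma>" \<beta>] apply simp
      done
  qed
  also have "\<dots> = \<beta> * ((x + y) / 2) * PP \<beta> x y n + x * y * DP \<beta> x y n"
    by (simp add: PP_def DP_def sum.distrib sum_distrib_left)
  finally show ?thesis .
qed


definition BB :: "real \<Rightarrow> real \<Rightarrow> real \<Rightarrow> nat \<Rightarrow> real" where
  "BB \<beta> x y n = (\<Sum>k\<le>n. of_nat (n choose k) * (\<beta> * (y - x) / 2) ^ (n - k) * AA \<beta> x y k)"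

definition DB :: "real \<Rightarrow> real \<Rightarrow> real \<Rightarrow> nat \<Rightarrow> real" where
  "DB \<beta> x y n = (\<Sum>k\<le>n. of_nat (n choose k) * (\<beta> * (y - x) / 2) ^ (n - k) * DA \<beta> x y k)"

lemma BB_deriv: "((\<lambda>t. BB \<beta> (x + t) (y + t) n) has_real_derivative DB \<beta> x y n) (at 0)"
proof -
  have e: "(\<lambda>t. BB \<beta> (x + t) (y + t) n)
     = (\<lambda>t. \<Sum>k\<le>n. of_nat (n choose k) * (\<beta> * (y - x) / 2) ^ (n - k) * AA \<beta> (x + t) (y + t) k)"
    by (simp add: BB_def)
  show ?thesis unfolding e DB_def by (intro DERIV_sum DERIV_cmult AA_deriv)
qed

lemma pascal_sum:
  fixes f :: "nat \<Rightarrow> real"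
  shows "(\<Sum>k\<le>Suc n. of_nat (Suc n choose k) * f k)
       = (\<Sum>k\<le>n. of_nat (n choose k) * f k) + (\<Sum>k\<le>n. of_nat (n choose k) * f (Suc k))"
proof -
  have 1: "(\<Sum>k\<le>Suc n. of_nat (Suc n choose k) * f k) = f 0 + (\<Sum>k\<le>n. of_nat (Suc n choose Suc k) * f (Suc k))"
    by (subst sum.atMost_Suc_shift) simp
  have 2: "(\<Sum>k\<le>n. of_nat (Suc n choose Suc k) * f (Suc k))
     = (\<Sum>k\<le>n. of_nat (n choose k) * f (Suc k)) + (\<Sum>k\<le>n. of_nat (n choose Suc k) * f (Suc k))"
    by (simp add: sum.distrib algebra_simps)
  have 3: "(\<Sum>k\<le>Suc n. of_nat (n choose k) * f k) = f 0 + (\<Sum>k\<le>n. of_nat (n choose Suc k) * f (Suc k))"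
    by (subst sum.atMost_Suc_shift) simp
  have 4: "(\<Sum>k\<le>Suc n. of_nat (n choose k) * f k) = (\<Sum>k\<le>n. of_nat (n choose k) * f k)"
    by simp
  show ?thesis using 1 2 3 4 by linarith
qed

lemma BB_rec: "BB \<beta> x y (Suc n) = \<beta> * ((x + y) / 2) * BB \<beta> x y n + x * y * DB \<beta> x y n"
proof -
  define c where "c = \<beta> * (y - x) / 2"
  define f where "f k = c ^ (Suc n - k) * AA \<beta> x y k" for k
  have "BB \<beta> x y (Suc n) = (\<Sum>k\<le>Suc n. of_nat (Suc n choose k) * f k)"
    by (simp add: BB_def f_def c_def mult.assoc)
  also have "\<dots> = (\<Sum>k\<le>n. of_nat (n choose k) * f k + of_nat (n choose k) * f (Suc k))"
    by (subst pascal_sum) (simp add: sum.distrib)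
  also have "\<dots> = (\<Sum>k\<le>n. \<beta> * ((x + y) / 2) * (of_nat (n choose k) * c ^ (n - k) * AA \<beta> x y k)
        + x * y * (of_nat (n choose k) * c ^ (n - k) * DA \<beta> x y k))"
  proof (rule sum.cong[OF refl])
    fix k assume "k \<in> {..n}"
    then have k: "k \<le> n" by simp
    have p1: "c ^ (Suc n - k) = c ^ (n - k) * c" using k by (simp add: Suc_diff_le)
    have p2: "c ^ (Suc n - Suc k) = c ^ (n - k)" by simp
    have r: "x * y * DA \<beta> x y k = AA \<beta> x y (Suc k) - \<beta> * x * AA \<beta> x y k" using AA_rec[of \<beta> x y k] by simp
    show "of_nat (n choose k) * f k + of_nat (n choose k) * f (Suc k)
      = \<beta> * ((x + y) / 2) * (of_nat (n choose k) * c ^ (n - k) * AA \<beta> x y k)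
        + x * y * (of_nat (n choose k) * c ^ (n - k) * DA \<beta> x y k)"
    proof -
      have "x * y * (of_nat (n choose k) * c ^ (n - k) * DA \<beta> x y k)
          = of_nat (n choose k) * c ^ (n - k) * (x * y * DA \<beta> x y k)" by (simp add: algebra_simps)
      also have "\<dots> = of_nat (n choose k) * c ^ (n - k) * (AA \<beta> x y (Suc k) - \<beta> * x * AA \<beta> x y k)"
        by (simp only: r)
      finally have h: "x * y * (of_nat (n choose k) * c ^ (n - k) * DA \<beta> x y k)
          = of_nat (n choose k) * c ^ (n - k) * (AA \<beta> x y (Suc k) - \<beta> * x * AA \<beta> x y k)" .
      have cu: "\<beta> * ((x + y) / 2) = \<beta> * x + c" by (simp add: c_def field_simps)
      show ?thesis unfolding h unfolding f_def p1 p2 unfolding cu by (simp add: algebra_simps)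
    qed
  qed
  also have "\<dots> = \<beta> * ((x + y) / 2) * BB \<beta> x y n + x * y * DB \<beta> x y n"
    by (simp add: BB_def DB_def sum.distrib sum_distrib_left c_def)
  finally show ?thesis .
qed

lemma PP_BB: "PP \<beta> x y n = BB \<beta> x y n"
proof (induction n arbitrary: x y)
  case 0
  have "lpk [] = 0" "RLmin [] = 0" by (simp_all add: lpk_def RLmin_def)
  then show ?case by (simp add: PP_def BB_def wP_def AA_def)
next
  case (Suc n)
  have e: "(\<lambda>t. PP \<beta> (x + t) (y + t) n) = (\<lambda>t. BB \<beta> (x + t) (y + t) n)" using Suc.IH by simp
  have "DP \<beta> x y n = DB \<beta> x y n"
    using PP_deriv[of \<beta> x y n] BB_deriv[of \<beta> x y n] unfolding e by (rule DERIV_unique)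
  then show ?case using Suc.IH[of x y] by (simp add: PP_rec BB_rec)
qed

theorem theorem6p5:
  fixes x y \<beta> :: real and n :: nat
  assumes "n \<ge> 1"
  shows "(\<Sum>\<sigma>\<in>permutations_of_set {1..n}.
            (x * y) ^ lpk \<sigma> * ((x + y) / 2) ^ (n - 2 * lpk \<sigma>) * \<beta> ^ RLmin \<sigma>)
       = (\<Sum>k = 1..n. of_nat (n choose k) * (\<beta> * (y - x)) ^ (n - k) / 2 ^ (n - k) *
            (\<Sum>\<sigma>\<in>permutations_of_set {1..k}.
               x ^ (des \<sigma> + 1) * y ^ asc \<sigma> * \<beta> ^ LRmin \<sigma>))
         + (\<beta> * (y - x) / 2) ^ n"
proof -
  have "(\<Sum>\<sigma>\<in>permutations_of_set {1..n}.
            (x * y) ^ lpk \<sigma> * ((x + y) / 2) ^ (n - 2 * lpk \<sigma>) * \<beta> ^ RLmin \<sigma>) = PP \<beta> x y n"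
    by (simp add: PP_def wP_def)
  also have "\<dots> = BB \<beta> x y n" by (rule PP_BB)
  also have "{..n} = insert 0 {1..n}" by auto
  then have "BB \<beta> x y n = (\<beta> * (y - x) / 2) ^ n
      + (\<Sum>k = 1..n. of_nat (n choose k) * (\<beta> * (y - x) / 2) ^ (n - k) * AA \<beta> x y k)"
    by (simp add: BB_def AA_def)
  also have "(\<Sum>k = 1..n. of_nat (n choose k) * (\<beta> * (y - x) / 2) ^ (n - k) * AA \<beta> x y k)
     = (\<Sum>k = 1..n. of_nat (n choose k) * (\<beta> * (y - x)) ^ (n - k) / 2 ^ (n - k) *
            (\<Sum>\<sigma>\<in>permutations_of_set {1..k}.
               x ^ (des \<sigma> + 1) * y ^ asc \<sigma> * \<beta> ^ LRmin \<sigma>))"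
    by (rule sum.cong[OF refl]) (simp add: AA_def wA_def power_divide)
  finally show ?thesis by simp
qed

end
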